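(* Let $T$ be a bounded linear operator on the Bergman space $A^2$ and let $0<p<\infty$. Then the function $F(w)=\|TK_w\|^p$ is subharmonic on the unit disk $\mathbb{D}$.
   Context: $\mathbb{D}$ is the open unit disk in $\mathbb{C}$. $dA$ is area measure on $\mathbb{D}$ normalized so that $\mathbb{D}$ has area $1$. $A^2$ is the Hilbert space of analytic functions $f$ on $\mathbb{D}$ with $\|f\|^2=\int_{\mathbb{D}}|f|^2\,dA<\infty$. For $w\in\mathbb{D}$, $K_w(z)=(1-z\overline w)^{-2}$ is the Bergman reproducing kernel, and the norm $\|TK_w\|$ is the norm in $A^2$. *)

theory Defs
  imports "HOL-Analysis.Analysis"
begin

text \<open>Normalized area measure dA = (1/pi) dx dy on the unit disk; Bergman norm.\<close>
definition bergman_norm :: "(complex \<Rightarrow> complex) \<Rightarrow> real" where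
  "bergman_norm f = sqrt ((1 / pi) * (\<integral>z\<in>ball 0 1. (cmod (f z))\<^sup>2 \<partial>lborel))"

text \<open>The Bergman space A^2 (functions are only relevant on the open unit disk).\<close>
definition bergman_space :: "(complex \<Rightarrow> complex) set" where
  "bergman_space = {f. f holomorphic_on ball 0 1 \<and>
      set_integrable lborel (ball 0 1) (\<lambda>z. (cmod (f z))\<^sup>2)}"

definition bergman_kernel :: "complex \<Rightarrow> complex \<Rightarrow> complex" where
  "bergman_kernel w = (\<lambda>z. 1 / (1 - z * cnj w)\<^sup>2)"

text \<open>Bounded linear operator on A^2, functions compared on the disk only.\<close>
definition bounded_op_A2 :: "((complex \<Rightarrow> complex) \<Rightarrow> (complex \<Rightarrow> complex)) \<Rightarrow> bool" where
  "bounded_op_A2 T \<longleftrightarrow>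
     (\<forall>f\<in>bergman_space. T f \<in> bergman_space) \<and>
     (\<forall>f\<in>bergman_space. \<forall>g\<in>bergman_space. \<forall>a b. \<forall>z\<in>ball 0 1.
         T (\<lambda>x. a * f x + b * g x) z = a * T f z + b * T g z) \<and>
     (\<exists>C. \<forall>f\<in>bergman_space. bergman_norm (T f) \<le> C * bergman_norm f)"

definition upper_semicontinuous_on :: "'a::topological_space set \<Rightarrow> ('a \<Rightarrow> real) \<Rightarrow> bool" where
  "upper_semicontinuous_on S F \<longleftrightarrow>
     (\<forall>a\<in>S. \<forall>c. F a < c \<longrightarrow> (\<forall>\<^sub>F x in at a within S. F x < c))"

definition subharmonic_on :: "complex set \<Rightarrow> (complex \<Rightarrow> real) \<Rightarrow> bool" where
  "subharmonic_on S F \<longleftrightarrow> upper_semicontinuous_on S F \<and>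
     (\<forall>a r. r > 0 \<and> cball a r \<subseteq> S \<longrightarrow>
        set_integrable lborel {0..2*pi} (\<lambda>t. F (a + r * cis t)) \<and>
        F a \<le> (1 / (2*pi)) * (\<integral>t\<in>{0..2*pi}. F (a + r * cis t) \<partial>lborel))"

end

theory Submission
  imports Defs "HOL-Computational_Algebra.Fundamental_Theorem_Algebra"
begin

lemma cis_int0:
  assumes "n \<ge> (1::nat)"
  shows "((\<lambda>t. cis (real n * t)) has_integral 0) {0..2*pi}"
proof -
  have d0: "((\<lambda>z. exp (\<i> * of_nat n * z) / (\<i> * of_nat n)) has_field_derivative exp (\<i> * of_nat n * z)) (at z)" for z
    using assms by (auto intro!: derivative_eq_intros)
  have d: "((\<lambda>t. exp (\<i> * of_nat n * complex_of_real t) / (\<i> * of_nat n)) has_vector_derivative exp (\<i> * of_nat n * complex_of_real t)) (at t within {0..2*pi})" for t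
    by (rule has_vector_derivative_real_field[OF d0])
  have "((\<lambda>t. exp (\<i> * of_nat n * complex_of_real t)) has_integral 
     (exp (\<i> * of_nat n * complex_of_real (2*pi)) / (\<i> * of_nat n) - exp (\<i> * of_nat n * complex_of_real 0) / (\<i> * of_nat n))) {0..2*pi}"
    by (rule fundamental_theorem_of_calculus) (auto intro: d)
  moreover have "exp (\<i> * of_nat n * complex_of_real (2*pi)) = 1"
  proof -
    have "exp (2 * of_nat n * complex_of_real pi * \<i>) = 1"
      using exp_integer_2pi[of "of_nat n"] by simp
    thus ?thesis by (simp add: mult_ac)
  qed
  moreover have "\<And>t. exp (\<i> * of_nat n * complex_of_real t) = cis (real n * t)"
    by (simp add: cis_conv_exp mult_ac)
  ultimately show ?thesis by simp
qed


lemma cis_int0_L: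
  assumes "n \<ge> (1::nat)"
  shows "(LINT t:{0..2*pi}|lborel. cis (real n * t)) = 0"
proof -
  have "set_integrable lborel {0..2*pi} (\<lambda>t. cis (real n * t))"
    unfolding set_integrable_def
    by (rule borel_integrable_compact) (auto intro!: continuous_intros)
  hence "(LINT t:{0..2*pi}|lborel. cis (real n * t)) = integral {0..2*pi} (\<lambda>t. cis (real n * t))"
    by (rule set_borel_integral_eq_integral)
  also have "\<dots> = 0" using cis_int0[OF assms] by (rule integral_unique)
  finally show ?thesis .
qed

lemma ln_mean0:
  assumes w: "cmod w < 1"
  shows "set_integrable lborel {0..2*pi} (\<lambda>t. ln (cmod (1 - w * cis t)))"
    "(LINT t:{0..2*pi}|lborel. ln (cmod (1 - w * cis t))) = 0"
proof -
  define A where "A = {0..2*pi}"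
  define f where "f i t = indicator A t *\<^sub>R (-((w * cis t)^i) / of_nat i)" for i t
  have sums: "(\<lambda>i. f i t) sums (indicator A t *\<^sub>R Ln (1 - w * cis t))" for t
  proof -
    have "cmod (-(w * cis t)) < 1" using w by (simp add: norm_mult)
    from Ln_series'[OF this] have "(\<lambda>n. - ((w * cis t) ^ n) / of_nat n) sums Ln (1 - w * cis t)"
      by simp
    thus ?thesis unfolding f_def by (rule sums_scaleR_right)
  qed
  have int: "integrable lborel (f i)" for i
    unfolding f_def A_def divide_inverse
    by (rule borel_integrable_compact) (auto intro!: continuous_intros)
  have nb: "norm (f i t) \<le> cmod w ^ i" for i t
  proof -
    have "norm (f i t) \<le> norm ((w * cis t)^i / of_nat i)"
      unfolding f_def by (auto simp: indicator_def)
    also have "\<dots> = cmod w ^ i / real i"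
      by (simp add: norm_mult norm_power norm_divide del: of_nat_Suc)
    also have "\<dots> \<le> cmod w ^ i"
    proof (cases "i = 0")
      case False
      hence "real i \<ge> 1" by simp
      hence "cmod w ^ i / real i \<le> cmod w ^ i / 1" by (intro divide_left_mono) auto
      thus ?thesis by simp
    qed simp
    finally show ?thesis .
  qed
  have sg: "summable (\<lambda>i. cmod w ^ i)" using w by (simp add: summable_geometric)
  have s1: "AE t in lborel. summable (\<lambda>i. norm (f i t))"
    by (rule AE_I2, rule summable_comparison_test[OF _ sg]) (use nb in auto)
  have ib: "(\<integral>t. norm (f i t) \<partial>lborel) \<le> 2*pi * cmod w ^ i" for i
  proof -
    have "(\<integral>t. norm (f i t) \<partial>lborel) \<le> (\<integral>t. indicator A t *\<^sub>R cmod w ^ i \<partial>lborel)"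
      apply (rule integral_mono)
      using int apply auto[1]
      apply (unfold A_def, rule borel_integrable_compact, auto)[1]
      unfolding f_def by (auto simp: indicator_def norm_mult norm_power norm_divide divide_le_eq mult_le_cancel_left1 intro: mult_le_cancel_left1 split: if_splits)
    also have "\<dots> = 2*pi * cmod w ^ i"
      using set_integral_const[of A lborel "cmod w ^ i"] unfolding set_lebesgue_integral_def A_def by simp
    finally show ?thesis .
  qed
  have s2: "summable (\<lambda>i. (\<integral>t. norm (f i t) \<partial>lborel))"
    apply (rule summable_comparison_test[of _ "\<lambda>i. 2*pi * cmod w ^ i"])
    using ib w apply (auto intro!: summable_mult sg)
    done
  have i0: "integral\<^sup>L lborel (f i) = 0" for i
  proof (cases i)
    case 0 have "f 0 = (\<lambda>t. 0)" by (auto simp: f_def)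
    thus ?thesis using 0 by simp
  next
    case (Suc m)
    have "integral\<^sup>L lborel (f i) = (LINT t:A|lborel. (- (w ^ i) / of_nat i) * cis (real i * t))"
      unfolding set_lebesgue_integral_def f_def
      by (rule Bochner_Integration.integral_cong) (auto simp: power_mult_distrib Complex.DeMoivre)
    also have "\<dots> = (- (w ^ i) / of_nat i) * (LINT t:A|lborel. cis (real i * t))"
      by (rule set_integral_mult_right)
    also have "\<dots> = 0" using cis_int0_L[of i] Suc A_def by simp
    finally show ?thesis .
  qed
  have S: "(\<lambda>t. \<Sum>i. f i t) = (\<lambda>t. indicator A t *\<^sub>R Ln (1 - w * cis t))"
    using sums sums_unique by (metis)
  have I1: "integrable lborel (\<lambda>t. indicator A t *\<^sub>R Ln (1 - w * cis t))"
    using integrable_suminf[OF int s1 s2] S by simp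
  have I2: "(\<integral>t. indicator A t *\<^sub>R Ln (1 - w * cis t) \<partial>lborel) = 0"
    using integral_suminf[OF int s1 s2] S i0 by simp
  have nz: "1 - w * cis t \<noteq> 0" for t
  proof
    assume "1 - w * cis t = 0"
    hence "cmod (w * cis t) = 1" by (metis eq_iff_diff_eq_0 norm_one)
    thus False using w by (simp add: norm_mult)
  qed
  have E: "indicator A t *\<^sub>R ln (cmod (1 - w * cis t)) = Re (indicator A t *\<^sub>R Ln (1 - w * cis t))" for t
    using nz[of t] by (simp add: Re_Ln)
  show "set_integrable lborel {0..2*pi} (\<lambda>t. ln (cmod (1 - w * cis t)))"
    unfolding set_integrable_def A_def[symmetric] E using integrable_Re[OF I1] by simp
  show "(LINT t:{0..2*pi}|lborel. ln (cmod (1 - w * cis t))) = 0"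
    unfolding set_lebesgue_integral_def A_def[symmetric] E
    using integral_Re[of lborel "\<lambda>t. indicator A t *\<^sub>R Ln (1 - w * cis t)"] I1 I2 by simp
qed


lemma set_integral_sum':
  fixes f :: "'i \<Rightarrow> 'a \<Rightarrow> real"
  assumes "\<And>i. i \<in> I \<Longrightarrow> set_integrable M A (f i)"
  shows "set_integrable M A (\<lambda>x. \<Sum>i\<in>I. f i x)"
    "(LINT x:A|M. (\<Sum>i\<in>I. f i x)) = (\<Sum>i\<in>I. (LINT x:A|M. f i x))"
  using assms unfolding set_integrable_def set_lebesgue_integral_def
  by (auto simp: sum_distrib_left intro!: integrable_sum)

lemma set_integrable_const_Icc:
  "set_integrable lborel {a..b::real} (\<lambda>_. c::real)"
  unfolding set_integrable_def by (rule borel_integrable_compact) auto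

lemma prod_mean_lt1:
  fixes w :: "nat \<Rightarrow> complex" and p :: real
  assumes w: "\<And>i. i < n \<Longrightarrow> cmod (w i) < 1" and p: "p > 0"
  shows "2*pi \<le> (LINT t:{0..2*pi}|lborel. (\<Prod>i<n. cmod (1 - w i * cis t) powr p))"
proof -
  have nz: "cmod (1 - w i * cis t) > 0" if "i < n" for i t
  proof -
    have "1 - w i * cis t \<noteq> 0"
    proof
      assume "1 - w i * cis t = 0"
      hence "cmod (w i * cis t) = 1" by (metis eq_iff_diff_eq_0 norm_one)
      thus False using w[OF that] by (simp add: norm_mult)
    qed
    thus ?thesis by simp
  qed
  have eq: "(\<Prod>i<n. cmod (1 - w i * cis t) powr p) = exp (\<Sum>i<n. p * ln (cmod (1 - w i * cis t)))" for t
  proof -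
    have "(\<Prod>i<n. cmod (1 - w i * cis t) powr p) = (\<Prod>i<n. exp (p * ln (cmod (1 - w i * cis t))))"
      by (rule prod.cong) (use nz in \<open>auto simp: powr_def\<close>)
    thus ?thesis by (simp add: exp_sum)
  qed
  have low: "1 + (\<Sum>i<n. p * ln (cmod (1 - w i * cis t))) \<le> (\<Prod>i<n. cmod (1 - w i * cis t) powr p)" for t
    unfolding eq by (rule exp_ge_add_one_self)
  have si: "set_integrable lborel {0..2*pi} (\<lambda>t. p * ln (cmod (1 - w i * cis t)))" if "i < n" for i
    using ln_mean0(1)[OF w[OF that]] by simp
  have s0: "(LINT t:{0..2*pi}|lborel. p * ln (cmod (1 - w i * cis t))) = 0" if "i < n" for i
    using ln_mean0(2)[OF w[OF that]] by simp
  have SI: "set_integrable lborel {0..2*pi} (\<lambda>t. \<Sum>i<n. p * ln (cmod (1 - w i * cis t)))"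
    by (rule set_integral_sum'(1)) (use si in auto)
  have SV: "(LINT t:{0..2*pi}|lborel. (\<Sum>i<n. p * ln (cmod (1 - w i * cis t)))) = 0"
    by (subst set_integral_sum'(2)) (use si s0 ln_mean0(2) w in \<open>auto intro!: sum.neutral\<close>)
  have cont: "set_integrable lborel {0..2*pi} (\<lambda>t. (\<Prod>i<n. cmod (1 - w i * cis t) powr p))"
    unfolding set_integrable_def
    by (rule borel_integrable_compact) (auto intro!: continuous_intros continuous_on_powr' simp: p)
  have "(LINT t:{0..2*pi}|lborel. 1 + (\<Sum>i<n. p * ln (cmod (1 - w i * cis t)))) = 2*pi"
    using set_integral_add(2)[OF set_integrable_const_Icc[of 0 "2*pi" 1] SI] SV
    by (simp add: set_integral_const)
  moreover have "(LINT t:{0..2*pi}|lborel. 1 + (\<Sum>i<n. p * ln (cmod (1 - w i * cis t)))) \<le>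
     (LINT t:{0..2*pi}|lborel. (\<Prod>i<n. cmod (1 - w i * cis t) powr p))"
    by (rule set_integral_mono[OF set_integral_add(1)[OF set_integrable_const_Icc SI] cont low])
  ultimately show ?thesis by simp
qed


lemma prod_mean_le1:
  fixes w :: "nat \<Rightarrow> complex" and p :: real
  assumes w: "\<And>i. i < n \<Longrightarrow> cmod (w i) \<le> 1" and p: "p > 0"
  shows "2*pi \<le> (LINT t:{0..2*pi}|lborel. (\<Prod>i<n. cmod (1 - w i * cis t) powr p))"
proof -
  define A where "A = {0..2*pi}"
  define e where "e m = 1 - 1 / (real m + 2)" for m
  have e0: "0 \<le> e m" "e m < 1" for m by (auto simp: e_def field_simps)
  have el: "e \<longlonglongrightarrow> 1"
  proof -
    have "(\<lambda>m. 1 / (real m + 2)) \<longlonglongrightarrow> 0"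
      by real_asymp
    hence "(\<lambda>m. 1 - 1 / (real m + 2)) \<longlonglongrightarrow> 1 - 0" by (intro tendsto_intros)
    thus ?thesis unfolding e_def by simp
  qed
  define g where "g u t = indicator A t * (\<Prod>i<n. cmod (1 - u i * cis t) powr p)" for u t
  define s where "s m = g (\<lambda>i. of_real (e m) * w i)" for m
  have meas: "g u \<in> borel_measurable lborel" for u
  proof -
    have "integrable lborel (g u)"
      unfolding g_def A_def
      apply (rule borel_integrable_compact[of "{0..2*pi}" "\<lambda>t. (\<Prod>i<n. cmod (1 - u i * cis t) powr p)", simplified])
      by (auto intro!: continuous_intros continuous_on_powr' simp: p)
    thus ?thesis by auto
  qed
  have bnd: "norm (s m t) \<le> indicator A t * (2 powr p) ^ n" for m t
  proof -
    have "(\<Prod>i<n. cmod (1 - of_real (e m) * w i * cis t) powr p) \<le> (\<Prod>i<n. 2 powr p)"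
    proof (rule prod_mono, safe)
      fix i assume i: "i < n"
      have "cmod (1 - of_real (e m) * w i * cis t) \<le> 1 + cmod (of_real (e m) * w i * cis t)"
        by (rule norm_triangle_ineq4[THEN order_trans]) simp
      also have "\<dots> \<le> 2" using e0[of m] w[OF i]
        using mult_le_one[of "e m" "cmod (w i)"] by (simp add: norm_mult abs_of_nonneg)
      finally show "cmod (1 - of_real (e m) * w i * cis t) powr p \<le> 2 powr p"
        using p by (intro powr_mono2) auto
    qed simp
    thus ?thesis unfolding s_def g_def
      by (auto simp: indicator_def abs_prod intro!: prod_nonneg)
  qed
  have lim: "(\<lambda>m. s m t) \<longlonglongrightarrow> g w t" for t
    unfolding s_def g_def
    by (rule tendsto_intros | rule tendsto_powr' | use el p in \<open>auto intro!: tendsto_eq_intros\<close>)+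
  have intb: "integrable lborel (\<lambda>t. indicator A t * (2 powr p) ^ n)"
    unfolding A_def using set_integrable_const_Icc[of 0 "2*pi" "(2 powr p)^n"]
    unfolding set_integrable_def by simp
  have conv: "(\<lambda>m. integral\<^sup>L lborel (s m)) \<longlonglongrightarrow> integral\<^sup>L lborel (g w)"
    by (rule integral_dominated_convergence[OF meas _ intb]) (use meas bnd lim s_def in auto)
  have ge: "2*pi \<le> integral\<^sup>L lborel (s m)" for m
  proof -
    have "cmod (of_real (e m) * w i) < 1" if "i < n" for i
      using e0[of m] w[OF that] mult_left_le[of "cmod (w i)" "e m"] by (simp add: norm_mult abs_of_nonneg)
    from prod_mean_lt1[of n "\<lambda>i. of_real (e m) * w i", OF this p]
    show ?thesis unfolding s_def g_def set_lebesgue_integral_def A_def by simp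
  qed
  have "2*pi \<le> integral\<^sup>L lborel (g w)"
    by (rule LIMSEQ_le_const[OF conv]) (use ge in auto)
  thus ?thesis unfolding g_def set_lebesgue_integral_def A_def by simp
qed


lemma factor_circle:
  fixes a :: complex and r :: real
  assumes r: "r > 0" and a: "a \<noteq> 0"
  defines "D \<equiv> (if r \<le> cmod a then cmod a else r)"
      and "w \<equiv> (if r \<le> cmod a then of_real r / a else cnj a / of_real r)"
  shows "cmod (of_real r * cis t - a) = D * cmod (1 - w * cis t)" "cmod w \<le> 1" "cmod a \<le> D"
proof -
  show "cmod w \<le> 1"
    using r a by (auto simp: w_def norm_divide divide_le_eq)
  show "cmod a \<le> D" by (auto simp: D_def)
  show "cmod (of_real r * cis t - a) = D * cmod (1 - w * cis t)"
  proof (cases "r \<le> cmod a")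
    case True
    have "cmod a * cmod (1 - of_real r / a * cis t) = cmod (a * (1 - of_real r / a * cis t))"
      by (simp add: norm_mult)
    also have "a * (1 - of_real r / a * cis t) = a - of_real r * cis t" using a by (simp add: field_simps)
    also have "cmod \<dots> = cmod (of_real r * cis t - a)" by (rule norm_minus_commute)
    finally show ?thesis using True by (simp add: D_def w_def)
  next
    case False
    have "r * cmod (1 - cnj a / of_real r * cis t) = cmod (of_real r * (1 - cnj a / of_real r * cis t))"
      using r by (simp add: norm_mult)
    also have "of_real r * (1 - cnj a / of_real r * cis t) = of_real r - cnj a * cis t"
      using r by (simp add: field_simps)
    also have "cmod \<dots> = cmod (cnj (of_real r - cnj a * cis t))" by (rule complex_mod_cnj[symmetric])
    also have "cnj (of_real r - cnj a * cis t) = cis (-t) * (of_real r * cis t - a)"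
      by (simp add: algebra_simps cis_cnj cis_mult flip: cis_divide)
    also have "cmod \<dots> = cmod (of_real r * cis t - a)" by (simp add: norm_mult)
    finally show ?thesis using False by (simp add: D_def w_def)
  qed
qed

lemma poly_mean:
  fixes P :: "complex poly" and r p :: real
  assumes P0: "poly P 0 \<noteq> 0" and r: "r > 0" and p: "p > 0"
  shows "2*pi * cmod (poly P 0) powr p \<le> (LINT t:{0..2*pi}|lborel. cmod (poly P (of_real r * cis t)) powr p)"
proof -
  obtain root where rt: "smult (lead_coeff P) (\<Prod>i<degree P. [:-root i, 1:]) = P"
    using complex_poly_decompose' by blast
  define n where "n = degree P"
  define c where "c = lead_coeff P"
  have pv: "poly P z = c * (\<Prod>i<n. z - root i)" for z
    by (subst rt[symmetric]) (simp add: c_def n_def poly_prod)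
  have rnz: "root i \<noteq> 0" if "i < n" for i
  proof
    assume "root i = 0"
    hence "(\<Prod>j<n. 0 - root j) = 0" using that by (intro prod_zero) auto
    thus False using P0 pv[of 0] by simp
  qed
  define D where "D i = (if r \<le> cmod (root i) then cmod (root i) else r)" for i
  define w where "w i = (if r \<le> cmod (root i) then of_real r / root i else cnj (root i) / of_real r)" for i
  note fc = factor_circle[OF r rnz, folded D_def w_def]
  have K: "cmod (poly P (of_real r * cis t)) powr p =
        (cmod c * (\<Prod>i<n. D i)) powr p * (\<Prod>i<n. cmod (1 - w i * cis t) powr p)" for t
  proof -
    have "cmod (poly P (of_real r * cis t)) = cmod c * (\<Prod>i<n. D i * cmod (1 - w i * cis t))"
      unfolding pv norm_mult prod_norm[symmetric]
      by (intro arg_cong2[where f="(*)"] refl prod.cong) (auto intro!: fc(1))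
    also have "\<dots> = (cmod c * (\<Prod>i<n. D i)) * (\<Prod>i<n. cmod (1 - w i * cis t))"
      by (simp add: prod.distrib)
    finally show ?thesis
      by (simp add: powr_mult prod_powr_distrib D_def prod_nonneg)
  qed
  have E1: "(LINT t:{0..2*pi}|lborel. cmod (poly P (of_real r * cis t)) powr p) =
        (cmod c * (\<Prod>i<n. D i)) powr p * (LINT t:{0..2*pi}|lborel. (\<Prod>i<n. cmod (1 - w i * cis t) powr p))"
    unfolding K by (rule set_integral_mult_right)
  have E2: "2*pi \<le> (LINT t:{0..2*pi}|lborel. (\<Prod>i<n. cmod (1 - w i * cis t) powr p))"
    by (rule prod_mean_le1[OF fc(2) p])
  have E3: "cmod (poly P 0) powr p \<le> (cmod c * (\<Prod>i<n. D i)) powr p"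
  proof -
    have "cmod (poly P 0) = cmod c * (\<Prod>i<n. cmod (root i))"
      by (simp add: pv norm_mult prod_norm[symmetric])
    also have "\<dots> \<le> cmod c * (\<Prod>i<n. D i)"
      by (intro mult_left_mono prod_mono) (use fc(3) in auto)
    finally show ?thesis using p by (intro powr_mono2) auto
  qed
  have "2*pi * cmod (poly P 0) powr p \<le> 2*pi * (cmod c * (\<Prod>i<n. D i)) powr p"
    using E3 by (intro mult_left_mono) auto
  also have "\<dots> = (cmod c * (\<Prod>i<n. D i)) powr p * (2*pi)" by simp
  also have "\<dots> \<le> (cmod c * (\<Prod>i<n. D i)) powr p * (LINT t:{0..2*pi}|lborel. (\<Prod>i<n. cmod (1 - w i * cis t) powr p))"
    using E2 by (intro mult_left_mono) auto
  finally show ?thesis using E1 by simp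
qed


lemma integrable_Icc_cont:
  fixes f :: "real \<Rightarrow> real"
  assumes "continuous_on {a..b} f"
  shows "integrable lborel (\<lambda>t. indicator {a..b} t * f t)"
  using borel_integrable_compact[OF compact_Icc assms] by simp

lemma series_mean:
  fixes c :: "nat \<Rightarrow> complex" and r p :: real
  assumes sm: "summable (\<lambda>n. cmod (c n) * r^n)" and r: "r > 0" and p: "p > 0"
  shows "2*pi * cmod (c 0) powr p \<le> (LINT t:{0..2*pi}|lborel. cmod (\<Sum>n. c n * (of_real r * cis t)^n) powr p)"
proof (cases "c 0 = 0")
  case True
  have "0 \<le> (LINT t:{0..2*pi}|lborel. cmod (\<Sum>n. c n * (of_real r * cis t)^n) powr p)"
    unfolding set_lebesgue_integral_def by (rule integral_nonneg_AE) (auto simp: indicator_def)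
  thus ?thesis using True by simp
next
  case False
  define A where "A = {0..2*pi}"
  define s where "s N t = indicator A t * cmod (\<Sum>n<Suc N. c n * (of_real r * cis t)^n) powr p" for N t
  define f where "f t = indicator A t * cmod (\<Sum>n. c n * (of_real r * cis t)^n) powr p" for t
  define B where "B = (\<Sum>n. cmod (c n) * r^n)"
  have nrm: "norm (c n * (of_real r * cis t)^n) = cmod (c n) * r^n" for n t
    using r by (simp add: norm_mult norm_power)
  have smt: "summable (\<lambda>n. c n * (of_real r * cis t)^n)" for t
    by (rule summable_norm_cancel) (simp add: nrm sm)
  have lim: "(\<lambda>N. s N t) \<longlonglongrightarrow> f t" for t
  proof -
    have "(\<lambda>N. \<Sum>n<N. c n * (of_real r * cis t)^n) \<longlonglongrightarrow> (\<Sum>n. c n * (of_real r * cis t)^n)"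
      by (rule summable_LIMSEQ[OF smt])
    hence "(\<lambda>N. \<Sum>n<Suc N. c n * (of_real r * cis t)^n) \<longlonglongrightarrow> (\<Sum>n. c n * (of_real r * cis t)^n)"
      by (rule LIMSEQ_Suc)
    thus ?thesis unfolding s_def f_def using p
      by (intro tendsto_intros tendsto_powr') auto
  qed
  have meas: "s N \<in> borel_measurable lborel" for N
  proof -
    have "integrable lborel (s N)"
      unfolding s_def A_def
      apply (rule integrable_Icc_cont)
      by (auto intro!: continuous_intros continuous_on_powr' simp: p)
    thus ?thesis by auto
  qed
  have measf: "f \<in> borel_measurable lborel"
    by (rule borel_measurable_LIMSEQ_metric[OF meas lim])
  have bnd: "norm (s N t) \<le> indicator A t * B powr p" for N t
  proof -
    have "cmod (\<Sum>n<Suc N. c n * (of_real r * cis t)^n) \<le> (\<Sum>n<Suc N. cmod (c n) * r^n)"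
      by (rule norm_sum[THEN order_trans]) (simp add: nrm)
    also have "\<dots> \<le> B" unfolding B_def
      by (rule sum_le_suminf[OF sm]) (use r in auto)
    finally have "cmod (\<Sum>n<Suc N. c n * (of_real r * cis t)^n) powr p \<le> B powr p"
      using p by (intro powr_mono2) auto
    thus ?thesis unfolding s_def by (auto simp: indicator_def)
  qed
  have intb: "integrable lborel (\<lambda>t. indicator A t * B powr p)"
    unfolding A_def using set_integrable_const_Icc[of 0 "2*pi" "B powr p"]
    unfolding set_integrable_def by simp
  have conv: "(\<lambda>N. integral\<^sup>L lborel (s N)) \<longlonglongrightarrow> integral\<^sup>L lborel f"
    by (rule integral_dominated_convergence[OF measf meas intb]) (use lim bnd in auto)
  have ge: "2*pi * cmod (c 0) powr p \<le> integral\<^sup>L lborel (s N)" for N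
  proof -
    define P where "P = (\<Sum>n<Suc N. monom (c n) n)"
    have pv: "poly P z = (\<Sum>n<Suc N. c n * z^n)" for z
      by (simp add: P_def poly_sum poly_monom)
    have "poly P 0 = c 0" unfolding pv by (simp add: sum.lessThan_Suc_shift del: sum.lessThan_Suc)
    from poly_mean[of P r p] this False r p
    show ?thesis unfolding s_def set_lebesgue_integral_def A_def pv by simp
  qed
  have "2*pi * cmod (c 0) powr p \<le> integral\<^sup>L lborel f"
    by (rule LIMSEQ_le_const[OF conv]) (use ge in auto)
  thus ?thesis unfolding f_def set_lebesgue_integral_def A_def by simp
qed


abbreviation "BB \<equiv> ball (0::complex) 1"

definition Qn :: "(complex \<Rightarrow> complex) \<Rightarrow> real" where
  "Qn f = (1 / pi) * (LINT z:BB|lborel. (cmod (f z))\<^sup>2)"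

definition ip :: "(complex \<Rightarrow> complex) \<Rightarrow> (complex \<Rightarrow> complex) \<Rightarrow> complex" where
  "ip f g = of_real (1 / pi) * (LINT z:BB|lborel. f z * cnj (g z))"

lemma bn_Q: "bergman_norm f = sqrt (Qn f)"
  by (simp add: bergman_norm_def Qn_def)

lemma Q_nonneg: "Qn f \<ge> 0"
  unfolding Qn_def set_lebesgue_integral_def
  by (intro mult_nonneg_nonneg integral_nonneg_AE) (auto simp: indicator_def)

lemma bn_nonneg: "bergman_norm f \<ge> 0"
  by (simp add: bn_Q Q_nonneg)

lemma bn_sq: "(bergman_norm f)\<^sup>2 = Qn f"
  by (simp add: bn_Q Q_nonneg)

lemma cont_meas:
  fixes f :: "complex \<Rightarrow> 'b::real_normed_vector"
  assumes "continuous_on BB f"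
  shows "set_borel_measurable lborel BB f"
proof -
  have "(\<lambda>x. indicator BB x *\<^sub>R f x) \<in> borel_measurable borel"
    using borel_measurable_continuous_on_indicator[of BB f] assms by auto
  thus ?thesis by (simp add: set_borel_measurable_def)
qed

lemma bs_cont: "f \<in> bergman_space \<Longrightarrow> continuous_on BB f"
  by (auto simp: bergman_space_def intro: holomorphic_on_imp_continuous_on)

lemma bs_sq: "f \<in> bergman_space \<Longrightarrow> set_integrable lborel BB (\<lambda>z. (cmod (f z))\<^sup>2)"
  by (auto simp: bergman_space_def)

lemma measure_BB: "measure lborel BB = pi"
  using content_ball[where c="0::complex" and r=1] by (simp add: unit_ball_vol_2)

lemma emeasure_BB: "emeasure lborel BB < \<infinity>"
  by (rule emeasure_bounded_finite) simp

lemma set_integrable_const_BB: "set_integrable lborel BB (\<lambda>_. c::real)"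
  unfolding set_integrable_def
  using has_bochner_integral_indicator[of BB lborel c] emeasure_BB by (auto intro: integrable.intros)

lemma bounded_sq_int:
  assumes "continuous_on BB f" "\<And>z. z \<in> BB \<Longrightarrow> cmod (f z) \<le> M"
  shows "set_integrable lborel BB (\<lambda>z. (cmod (f z))\<^sup>2)"
proof (rule set_integrable_bound[OF set_integrable_const_BB[of "M\<^sup>2"]])
  show "set_borel_measurable lborel BB (\<lambda>z. (cmod (f z))\<^sup>2)"
    by (rule cont_meas) (auto intro!: continuous_intros assms(1))
  show "AE x in lborel. x \<in> BB \<longrightarrow> norm ((cmod (f x))\<^sup>2) \<le> norm (M\<^sup>2)"
    using assms(2) by (auto intro!: power_mono simp: abs_le_square_iff)
qed

lemma bounded_bn:
  assumes "continuous_on BB f" "\<And>z. z \<in> BB \<Longrightarrow> cmod (f z) \<le> M"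
  shows "bergman_norm f \<le> M"
proof -
  have M: "M \<ge> 0" using order_trans[OF norm_ge_zero assms(2)[of 0]] by simp
  have "(LINT z:BB|lborel. (cmod (f z))\<^sup>2) \<le> (LINT z:BB|lborel. M\<^sup>2)"
    by (rule set_integral_mono[OF bounded_sq_int[OF assms] set_integrable_const_BB])
       (use assms(2) in \<open>auto intro!: power_mono\<close>)
  also have "\<dots> = pi * M\<^sup>2"
    using set_integral_const[of BB lborel "M\<^sup>2"] emeasure_BB measure_BB by simp
  finally have "Qn f \<le> M\<^sup>2" unfolding Qn_def by (simp add: field_simps)
  hence "sqrt (Qn f) \<le> sqrt (M\<^sup>2)" by (rule real_sqrt_le_mono)
  thus ?thesis using M by (simp add: bn_Q)
qed

lemma bounded_bs:
  assumes "f holomorphic_on BB" "\<And>z. z \<in> BB \<Longrightarrow> cmod (f z) \<le> M"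
  shows "f \<in> bergman_space"
  using bounded_sq_int[OF holomorphic_on_imp_continuous_on[OF assms(1)] assms(2)] assms(1)
  by (simp add: bergman_space_def)


lemma sq2: "(x + y)\<^sup>2 \<le> 2 * x\<^sup>2 + 2 * (y::real)\<^sup>2"
  using zero_le_power2[of "x - y"] power2_diff[of x y] power2_sum[of x y] by linarith

lemma sq3: "x \<ge> 0 \<Longrightarrow> y \<ge> 0 \<Longrightarrow> x * y \<le> x\<^sup>2 + (y::real)\<^sup>2"
  using zero_le_power2[of "x - y"] power2_diff[of x y] mult_nonneg_nonneg[of x y] by linarith

lemma lc_bs:
  assumes f: "f \<in> bergman_space" and g: "g \<in> bergman_space"
  shows "(\<lambda>x. a * f x + b * g x) \<in> bergman_space"
proof -
  have hf: "f holomorphic_on BB" and hg: "g holomorphic_on BB" using f g by (auto simp: bergman_space_def)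
  have hol: "(\<lambda>x. a * f x + b * g x) holomorphic_on BB"
    using hf hg by (auto intro!: holomorphic_intros)
  have bnd: "set_integrable lborel BB (\<lambda>x. 2 * (cmod a)\<^sup>2 * (cmod (f x))\<^sup>2 + 2 * (cmod b)\<^sup>2 * (cmod (g x))\<^sup>2)"
    using bs_sq[OF f] bs_sq[OF g] by (intro set_integral_add) auto
  have pt: "(cmod (a * f x + b * g x))\<^sup>2 \<le> 2 * (cmod a)\<^sup>2 * (cmod (f x))\<^sup>2 + 2 * (cmod b)\<^sup>2 * (cmod (g x))\<^sup>2" for x
  proof -
    have "cmod (a * f x + b * g x) \<le> cmod a * cmod (f x) + cmod b * cmod (g x)"
      using norm_triangle_ineq[of "a * f x" "b * g x"] by (simp add: norm_mult)
    hence "(cmod (a * f x + b * g x))\<^sup>2 \<le> (cmod a * cmod (f x) + cmod b * cmod (g x))\<^sup>2"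
      by (intro power_mono) auto
    also have "\<dots> \<le> 2 * (cmod a)\<^sup>2 * (cmod (f x))\<^sup>2 + 2 * (cmod b)\<^sup>2 * (cmod (g x))\<^sup>2"
      using sq2[of "cmod a * cmod (f x)" "cmod b * cmod (g x)"] by (simp add: power_mult_distrib)
    finally show ?thesis .
  qed
  have "set_integrable lborel BB (\<lambda>x. (cmod (a * f x + b * g x))\<^sup>2)"
  proof (rule set_integrable_bound[OF bnd])
    show "set_borel_measurable lborel BB (\<lambda>x. (cmod (a * f x + b * g x))\<^sup>2)"
      by (rule cont_meas) (use bs_cont[OF f] bs_cont[OF g] in \<open>auto intro!: continuous_intros\<close>)
    show "AE x in lborel. x \<in> BB \<longrightarrow> norm ((cmod (a * f x + b * g x))\<^sup>2) \<le> norm (2 * (cmod a)\<^sup>2 * (cmod (f x))\<^sup>2 + 2 * (cmod b)\<^sup>2 * (cmod (g x))\<^sup>2)"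
      using pt by (auto intro!: AE_I2 order_trans[OF _ abs_ge_self])
  qed
  with hol show ?thesis by (simp add: bergman_space_def)
qed

lemma ip_int:
  assumes f: "f \<in> bergman_space" and g: "g \<in> bergman_space"
  shows "set_integrable lborel BB (\<lambda>z. f z * cnj (g z))"
proof (rule set_integrable_bound[OF set_integral_add(1)[OF bs_sq[OF f] bs_sq[OF g]]])
  show "set_borel_measurable lborel BB (\<lambda>z. f z * cnj (g z))"
    by (rule cont_meas) (use bs_cont[OF f] bs_cont[OF g] in \<open>auto intro!: continuous_intros\<close>)
  have "cmod (f x) * cmod (g x) \<le> (cmod (f x))\<^sup>2 + (cmod (g x))\<^sup>2" for x
    by (rule sq3) auto
  thus "AE x in lborel. x \<in> BB \<longrightarrow> norm (f x * cnj (g x)) \<le> norm ((cmod (f x))\<^sup>2 + (cmod (g x))\<^sup>2)"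
    by (auto simp: norm_mult intro!: AE_I2)
qed

lemma ip_self:
  assumes f: "f \<in> bergman_space"
  shows "ip f f = of_real (Qn f)"
proof -
  have "(LINT z:BB|lborel. f z * cnj (f z)) = (LINT z:BB|lborel. complex_of_real ((cmod (f z))\<^sup>2))"
    by (simp only: complex_norm_square)
  also have "\<dots> = of_real (LINT z:BB|lborel. (cmod (f z))\<^sup>2)"
    by (rule set_integral_complex_of_real)
  finally show ?thesis by (simp add: ip_def Qn_def)
qed

lemma amgm_sqrt:
  fixes I a b :: real
  assumes a: "a \<ge> 0" and b: "b \<ge> 0" and H: "\<And>t. t > 0 \<Longrightarrow> I \<le> (t * a + b / t) / 2"
  shows "I \<le> sqrt a * sqrt b"
proof (cases "a > 0 \<and> b > 0")
  case True
  define t where "t = sqrt b / sqrt a"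
  have t: "t > 0" using True by (simp add: t_def)
  have sa: "sqrt a > 0" "sqrt b > 0" using True by auto
  have aa: "a = sqrt a * sqrt a" "b = sqrt b * sqrt b" using a b by simp_all
  have "t * a = sqrt a * sqrt b" unfolding t_def using sa by (subst aa(1)) (simp add: field_simps)
  moreover have "b / t = sqrt a * sqrt b" unfolding t_def using sa by (subst aa(2)) (simp add: field_simps)
  ultimately show ?thesis using H[OF t] by simp
next
  case False
  show ?thesis
  proof (rule ccontr)
    assume "\<not> ?thesis"
    hence I: "I > 0" using False a b by auto
    show False
    proof (cases "a = 0")
      case True
      define t where "t = b / I + 1"
      have "b / I \<ge> 0" using b I by simp
      hence t: "t > 0" by (simp add: t_def)
      have "b / t < I" using I b t unfolding t_def by (simp add: field_simps)
      moreover have "b / t \<ge> 0" using b t by simp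
      ultimately show False using H[OF t] True by simp
    next
      case False
      hence b0: "b = 0" using \<open>\<not> (a > 0 \<and> b > 0)\<close> a b by auto
      define t where "t = I / (a + 1)"
      have t: "t > 0" using a I by (simp add: t_def)
      have "t * a < I" using I a unfolding t_def by (simp add: field_simps)
      moreover have "t * a \<ge> 0" using a t by simp
      ultimately show False using H[OF t] b0 by simp
    qed
  qed
qed

lemma CS:
  assumes f: "f \<in> bergman_space" and g: "g \<in> bergman_space"
  shows "cmod (ip f g) \<le> bergman_norm f * bergman_norm g"
proof -
  define I where "I = (1/pi) * (LINT z:BB|lborel. cmod (f z) * cmod (g z))"
  have int1: "set_integrable lborel BB (\<lambda>z. cmod (f z) * cmod (g z))"
    using set_integrable_norm[OF ip_int[OF f g]] by (simp add: norm_mult)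
  have "cmod (ip f g) = (1/pi) * cmod (LINT z:BB|lborel. f z * cnj (g z))"
    by (simp add: ip_def norm_mult norm_divide)
  also have "\<dots> \<le> (1/pi) * (LINT z:BB|lborel. cmod (f z * cnj (g z)))"
    by (intro mult_left_mono set_integral_norm_bound ip_int f g) auto
  also have "\<dots> = I" by (simp add: I_def norm_mult)
  finally have c: "cmod (ip f g) \<le> I" .
  have "I \<le> sqrt (Qn f) * sqrt (Qn g)"
  proof (rule amgm_sqrt[OF Q_nonneg Q_nonneg])
    fix t :: real assume t: "t > 0"
    have pt: "cmod (f z) * cmod (g z) \<le> (t * (cmod (f z))\<^sup>2 + (cmod (g z))\<^sup>2 / t) / 2" for z
    proof -
      have "0 \<le> (t * cmod (f z) - cmod (g z))\<^sup>2 / t" using t by simp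
      also have "(t * cmod (f z) - cmod (g z))\<^sup>2 / t = t * (cmod (f z))\<^sup>2 + (cmod (g z))\<^sup>2 / t - 2 * (cmod (f z) * cmod (g z))"
        using t by (simp add: power2_eq_square field_simps)
      finally show ?thesis by simp
    qed
    have "(LINT z:BB|lborel. cmod (f z) * cmod (g z)) \<le> (LINT z:BB|lborel. (t * (cmod (f z))\<^sup>2 + (cmod (g z))\<^sup>2 / t) / 2)"
      by (rule set_integral_mono[OF int1]) (use pt bs_sq[OF f] bs_sq[OF g] in auto)
    also have "\<dots> = (t * (LINT z:BB|lborel. (cmod (f z))\<^sup>2) + (LINT z:BB|lborel. (cmod (g z))\<^sup>2) / t) / 2"
      using bs_sq[OF f] bs_sq[OF g] by (simp add: set_integral_add set_integral_divide_zero)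
    finally show "I \<le> (t * Qn f + Qn g / t) / 2"
      unfolding I_def Qn_def by (simp add: field_simps)
  qed
  with c show ?thesis by (simp add: bn_Q)
qed


lemma ip_lin:
  assumes f: "f \<in> bergman_space" and g: "g \<in> bergman_space" and h: "h \<in> bergman_space"
  shows "ip (\<lambda>x. a * f x + b * g x) h = a * ip f h + b * ip g h"
proof -
  have "(LINT z:BB|lborel. (a * f z + b * g z) * cnj (h z)) =
        (LINT z:BB|lborel. a * (f z * cnj (h z)) + b * (g z * cnj (h z)))"
    by (simp add: algebra_simps)
  also have "\<dots> = a * (LINT z:BB|lborel. f z * cnj (h z)) + b * (LINT z:BB|lborel. g z * cnj (h z))"
    using ip_int[OF f h] ip_int[OF g h] by (simp add: set_integral_add)
  finally show ?thesis by (simp add: ip_def algebra_simps)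
qed

lemma ip_cong:
  assumes "\<And>z. z \<in> BB \<Longrightarrow> f z = f' z"
  shows "ip f h = ip f' h"
proof -
  have "(LINT z:BB|lborel. f z * cnj (h z)) = (LINT z:BB|lborel. f' z * cnj (h z))"
    by (rule set_lebesgue_integral_cong) (use assms in auto)
  thus ?thesis by (simp add: ip_def)
qed

lemma bn_cong:
  assumes "\<And>z. z \<in> BB \<Longrightarrow> f z = f' z"
  shows "bergman_norm f = bergman_norm f'"
proof -
  have "(LINT z:BB|lborel. (cmod (f z))\<^sup>2) = (LINT z:BB|lborel. (cmod (f' z))\<^sup>2)"
    by (rule set_lebesgue_integral_cong) (use assms in auto)
  thus ?thesis by (simp add: bergman_norm_def)
qed

lemma diff_bs:
  assumes f: "f \<in> bergman_space" and g: "g \<in> bergman_space"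
  shows "(\<lambda>x. f x - g x) \<in> bergman_space" "(\<lambda>x. f x + g x) \<in> bergman_space"
  using lc_bs[OF f g, of 1 "-1"] lc_bs[OF f g, of 1 1] by simp_all

lemma ip_diff:
  assumes f: "f \<in> bergman_space" and g: "g \<in> bergman_space" and h: "h \<in> bergman_space"
  shows "ip (\<lambda>x. f x - g x) h = ip f h - ip g h"
  using ip_lin[OF f g h, of 1 "-1"] by simp

lemma sq_sum_pt: "(cmod (u + v))\<^sup>2 = (cmod u)\<^sup>2 + (cmod v)\<^sup>2 + 2 * Re (u * cnj v)"
  unfolding cmod_power2 by (simp add: power2_sum algebra_simps)

lemma Q_sum:
  assumes f: "f \<in> bergman_space" and g: "g \<in> bergman_space"
  shows "Qn (\<lambda>x. f x + g x) = Qn f + Qn g + 2 * Re (ip f g)"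
proof -
  define R where "R z = Re (f z * cnj (g z))" for z
  have iR: "set_integrable lborel BB R"
    using integrable_Re[OF ip_int[OF f g, unfolded set_integrable_def]] unfolding set_integrable_def R_def by simp
  have ReI: "(LINT z:BB|lborel. R z) = Re (LINT z:BB|lborel. f z * cnj (g z))"
    using integral_Re[of lborel "\<lambda>z. indicator BB z *\<^sub>R (f z * cnj (g z))"] ip_int[OF f g]
    unfolding set_lebesgue_integral_def set_integrable_def R_def by simp
  have "(LINT z:BB|lborel. (cmod (f z + g z))\<^sup>2) =
        (LINT z:BB|lborel. ((cmod (f z))\<^sup>2 + (cmod (g z))\<^sup>2) + 2 * R z)"
    by (simp only: sq_sum_pt R_def)
  also have "\<dots> = (LINT z:BB|lborel. (cmod (f z))\<^sup>2 + (cmod (g z))\<^sup>2) + (LINT z:BB|lborel. 2 * R z)"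
    by (rule set_integral_add(2)) (use bs_sq[OF f] bs_sq[OF g] iR in auto)
  also have "(LINT z:BB|lborel. (cmod (f z))\<^sup>2 + (cmod (g z))\<^sup>2) = (LINT z:BB|lborel. (cmod (f z))\<^sup>2) + (LINT z:BB|lborel. (cmod (g z))\<^sup>2)"
    by (rule set_integral_add(2)) (use bs_sq[OF f] bs_sq[OF g] in auto)
  also have "(LINT z:BB|lborel. 2 * R z) = 2 * (LINT z:BB|lborel. R z)"
    by (rule set_integral_mult_right)
  finally show ?thesis unfolding Qn_def ip_def ReI by (simp add: algebra_simps)
qed

lemma tri:
  assumes f: "f \<in> bergman_space" and g: "g \<in> bergman_space"
  shows "bergman_norm (\<lambda>x. f x + g x) \<le> bergman_norm f + bergman_norm g"
proof -
  have "Re (ip f g) \<le> bergman_norm f * bergman_norm g"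
    using CS[OF f g] complex_Re_le_cmod order_trans by blast
  hence "Qn (\<lambda>x. f x + g x) \<le> (bergman_norm f + bergman_norm g)\<^sup>2"
    unfolding Q_sum[OF f g] by (simp add: power2_sum bn_sq)
  hence "sqrt (Qn (\<lambda>x. f x + g x)) \<le> sqrt ((bergman_norm f + bergman_norm g)\<^sup>2)"
    by (rule real_sqrt_le_mono)
  thus ?thesis by (simp add: bn_Q[of "\<lambda>x. f x + g x"] bn_nonneg)
qed

lemma rev_tri:
  assumes f: "f \<in> bergman_space" and g: "g \<in> bergman_space"
  shows "\<bar>bergman_norm f - bergman_norm g\<bar> \<le> bergman_norm (\<lambda>x. f x - g x)"
proof -
  have "bergman_norm f = bergman_norm (\<lambda>x. (f x - g x) + g x)" by simp
  also have "\<dots> \<le> bergman_norm (\<lambda>x. f x - g x) + bergman_norm g"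
    by (rule tri[OF diff_bs(1)[OF f g] g])
  finally have 1: "bergman_norm f \<le> bergman_norm (\<lambda>x. f x - g x) + bergman_norm g" .
  have "bergman_norm g = bergman_norm (\<lambda>x. (g x - f x) + f x)" by simp
  also have "\<dots> \<le> bergman_norm (\<lambda>x. g x - f x) + bergman_norm f"
    by (rule tri[OF diff_bs(1)[OF g f] f])
  also have "bergman_norm (\<lambda>x. g x - f x) = bergman_norm (\<lambda>x. f x - g x)"
    by (simp add: bergman_norm_def norm_minus_commute)
  finally have 2: "bergman_norm g \<le> bergman_norm (\<lambda>x. f x - g x) + bergman_norm f" .
  from 1 2 show ?thesis by linarith
qed

context
  fixes T :: "(complex \<Rightarrow> complex) \<Rightarrow> (complex \<Rightarrow> complex)"
  assumes T: "bounded_op_A2 T"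
begin

lemma T_bs: "f \<in> bergman_space \<Longrightarrow> T f \<in> bergman_space"
  using T by (auto simp: bounded_op_A2_def)

lemma T_lin: "f \<in> bergman_space \<Longrightarrow> g \<in> bergman_space \<Longrightarrow> z \<in> BB \<Longrightarrow>
    T (\<lambda>x. a * f x + b * g x) z = a * T f z + b * T g z"
  using T unfolding bounded_op_A2_def by blast

lemma T_diff: "f \<in> bergman_space \<Longrightarrow> g \<in> bergman_space \<Longrightarrow> z \<in> BB \<Longrightarrow>
    T (\<lambda>x. f x - g x) z = T f z - T g z"
  using T_lin[of f g z 1 "-1"] by simp

lemma T_bound: obtains C where "\<And>f. f \<in> bergman_space \<Longrightarrow> bergman_norm (T f) \<le> C * bergman_norm f"
  using T unfolding bounded_op_A2_def by blast

lemma T_sum: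
  fixes N :: nat and g :: "nat \<Rightarrow> complex \<Rightarrow> complex"
  assumes "\<And>n. n < N \<Longrightarrow> g n \<in> bergman_space" and z: "z \<in> BB"
  shows "(\<lambda>x. \<Sum>n<N. c n * g n x) \<in> bergman_space \<and> T (\<lambda>x. \<Sum>n<N. c n * g n x) z = (\<Sum>n<N. c n * T (g n) z)"
  using assms(1)
proof (induction N)
  case 0
  have z0: "(\<lambda>x::complex. 0::complex) \<in> bergman_space"
    by (rule bounded_bs[of _ 0]) auto
  have "T (\<lambda>x. 0 * 0 + 0 * 0) z = 0 * T (\<lambda>x. 0) z + 0 * T (\<lambda>x. 0) z"
    by (rule T_lin[OF z0 z0 z])
  thus ?case using z0 by simp
next
  case (Suc N)
  have IH: "(\<lambda>x. \<Sum>n<N. c n * g n x) \<in> bergman_space"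
          "T (\<lambda>x. \<Sum>n<N. c n * g n x) z = (\<Sum>n<N. c n * T (g n) z)"
    using Suc by auto
  have gN: "g N \<in> bergman_space" using Suc by auto
  have e: "(\<lambda>x. \<Sum>n<Suc N. c n * g n x) = (\<lambda>x. 1 * (\<Sum>n<N. c n * g n x) + c N * g N x)" by simp
  show ?case
    unfolding e using lc_bs[OF IH(1) gN, of 1 "c N"] T_lin[OF IH(1) gN z, of 1 "c N"] IH(2) by simp
qed

end


definition kk :: "complex \<Rightarrow> nat \<Rightarrow> complex \<Rightarrow> complex" where
  "kk a n = (\<lambda>z. of_nat (Suc n) * z^n / (1 - z * cnj a)^(n+2))"

lemma den_bound:
  assumes a: "cmod a < 1" and z: "z \<in> BB"
  shows "cmod (1 - z * cnj a) \<ge> 1 - cmod a"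
proof -
  have "cmod (z * cnj a) \<le> cmod a" using z by (simp add: norm_mult mult_left_le_one_le)
  moreover have "1 - cmod (z * cnj a) \<le> cmod (1 - z * cnj a)"
    using norm_triangle_ineq2[of 1 "z * cnj a"] by simp
  ultimately show ?thesis by linarith
qed

lemma den_nz:
  assumes a: "cmod a < 1" and z: "z \<in> BB"
  shows "1 - z * cnj a \<noteq> 0"
  using den_bound[OF a z] a by auto

lemma K_bs:
  assumes w: "cmod w < 1"
  shows "bergman_kernel w \<in> bergman_space"
proof (rule bounded_bs[of _ "1 / (1 - cmod w)^2"])
  show "bergman_kernel w holomorphic_on BB"
    unfolding bergman_kernel_def using den_nz[OF w] by (auto intro!: holomorphic_intros)
  fix z assume z: "z \<in> BB"
  have "(1 - cmod w)^2 \<le> (cmod (1 - z * cnj w))^2"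
    using den_bound[OF w z] w by (intro power_mono) auto
  thus "cmod (bergman_kernel w z) \<le> 1 / (1 - cmod w)^2"
    unfolding bergman_kernel_def using w by (simp add: norm_divide norm_power frac_le)
qed

lemma kk_bound:
  assumes a: "cmod a < 1" and z: "z \<in> BB"
  shows "cmod (kk a n z) \<le> of_nat (Suc n) / (1 - cmod a)^(n+2)"
proof -
  have "cmod z ^ n \<le> 1" using z by (simp add: power_le_one)
  moreover have "(1 - cmod a)^(n+2) \<le> (cmod (1 - z * cnj a))^(n+2)"
    using den_bound[OF a z] a by (intro power_mono) auto
  moreover have "(1 - cmod a)^(n+2) > 0" using a by simp
  ultimately have "real (Suc n) * cmod z ^ n / cmod (1 - z * cnj a) ^ (n + 2) \<le> real (Suc n) * 1 / (1 - cmod a)^(n+2)"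
    by (intro frac_le mult_left_mono) auto
  thus ?thesis unfolding kk_def by (simp add: norm_mult norm_divide norm_power del: of_nat_Suc)
qed

lemma kk_bs:
  assumes a: "cmod a < 1"
  shows "kk a n \<in> bergman_space"
proof (rule bounded_bs[OF _ kk_bound[OF a]])
  show "kk a n holomorphic_on BB"
    unfolding kk_def using den_nz[OF a] by (auto intro!: holomorphic_intros)
qed

lemma kk_bn:
  assumes a: "cmod a < 1"
  shows "bergman_norm (kk a n) \<le> of_nat (Suc n) / (1 - cmod a)^(n+2)"
  by (rule bounded_bn[OF bs_cont[OF kk_bs[OF a]] kk_bound[OF a]])

lemma K_expand:
  assumes a: "cmod a < 1" and zeta: "cmod \<zeta> < 1 - cmod a" and z: "z \<in> BB"
  shows "(\<lambda>n. cnj \<zeta> ^ n * kk a n z) sums bergman_kernel (a + \<zeta>) z"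
proof -
  define d where "d = 1 - z * cnj a"
  have dnz: "d \<noteq> 0" using den_nz[OF a z] by (simp add: d_def)
  define x where "x = z * cnj \<zeta> / d"
  have "cmod x \<le> cmod \<zeta> / (1 - cmod a)"
  proof -
    have "cmod (z * cnj \<zeta>) \<le> cmod \<zeta>" using z by (simp add: norm_mult mult_left_le_one_le)
    moreover have "1 - cmod a \<le> cmod d" using den_bound[OF a z] by (simp add: d_def)
    ultimately show ?thesis unfolding x_def norm_divide using a
      by (intro frac_le) auto
  qed
  also have "\<dots> < 1" using zeta a by simp
  finally have x1: "cmod x < 1" .
  from geometric_deriv_sums[OF x1]
  have "(\<lambda>n. of_nat (Suc n) * x ^ n / d^2) sums (1 / (1 - x)^2 / d^2)"
    by (rule sums_divide)
  moreover have "of_nat (Suc n) * x ^ n / d^2 = cnj \<zeta> ^ n * kk a n z" for n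
    unfolding x_def kk_def d_def[symmetric] using dnz
    by (simp add: power_divide power_mult_distrib field_simps power_add power2_eq_square)
  moreover have "1 / (1 - x)^2 / d^2 = bergman_kernel (a + \<zeta>) z"
  proof -
    have "(1 - x) * d = 1 - z * cnj (a + \<zeta>)"
      unfolding x_def d_def using dnz[unfolded d_def] by (simp add: field_simps)
    thus ?thesis unfolding bergman_kernel_def
      by (metis divide_divide_eq_left power_mult_distrib)
  qed
  ultimately show ?thesis by simp
qed

lemma tail_bound:
  fixes u :: "nat \<Rightarrow> complex"
  assumes "u sums s" "\<And>n. cmod (u n) \<le> b n" "summable b"
  shows "cmod (s - (\<Sum>n<N. u n)) \<le> (\<Sum>i. b (i + N))"
proof -
  have "(\<lambda>i. u (i + N)) sums (s - (\<Sum>n<N. u n))" by (rule sums_split_initial_segment[OF assms(1)])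
  hence e: "s - (\<Sum>n<N. u n) = (\<Sum>i. u (i + N))" by (simp add: sums_iff)
  have sb: "summable (\<lambda>i. b (i + N))" by (rule summable_ignore_initial_segment[OF assms(3)])
  have sn: "summable (\<lambda>i. cmod (u (i + N)))"
    by (rule summable_comparison_test[OF _ sb]) (use assms(2) in auto)
  have "cmod (\<Sum>i. u (i + N)) \<le> (\<Sum>i. cmod (u (i + N)))" by (rule summable_norm[OF sn])
  also have "\<dots> \<le> (\<Sum>i. b (i + N))" by (rule suminf_le[OF _ sn sb]) (use assms(2) in auto)
  finally show ?thesis using e by simp
qed


lemma sum_bs:
  fixes N :: nat and g :: "nat \<Rightarrow> complex \<Rightarrow> complex"
  assumes "\<And>n. n < N \<Longrightarrow> g n \<in> bergman_space"
  shows "(\<lambda>x. \<Sum>n<N. c n * g n x) \<in> bergman_space"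
  using assms
proof (induction N)
  case 0 show ?case by simp (rule bounded_bs[of _ 0], auto)
next
  case (Suc N)
  have IH: "(\<lambda>x. \<Sum>n<N. c n * g n x) \<in> bergman_space" using Suc by auto
  have gN: "g N \<in> bergman_space" using Suc by auto
  show ?case using lc_bs[OF IH gN, of 1 "c N"] by simp
qed

lemma ip_sum:
  fixes N :: nat and g :: "nat \<Rightarrow> complex \<Rightarrow> complex" and c :: "nat \<Rightarrow> complex"
  assumes "\<And>n. n < N \<Longrightarrow> g n \<in> bergman_space" and h: "h \<in> bergman_space"
  shows "ip (\<lambda>x. \<Sum>n<N. c n * g n x) h = (\<Sum>n<N. c n * ip (g n) h)"
  using assms(1)
proof (induction N)
  case 0 show ?case by (simp add: ip_def)
next
  case (Suc N)
  have gs: "\<And>n. n < N \<Longrightarrow> g n \<in> bergman_space" using Suc by auto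
  have IH: "ip (\<lambda>x. \<Sum>n<N. c n * g n x) h = (\<Sum>n<N. c n * ip (g n) h)" using Suc gs by auto
  have gN: "g N \<in> bergman_space" using Suc by auto
  have e: "(\<lambda>x. \<Sum>n<Suc N. c n * g n x) = (\<lambda>x. 1 * (\<Sum>n<N. c n * g n x) + c N * g N x)" by simp
  show ?case unfolding e using ip_lin[OF sum_bs[OF gs] gN h, where a=1 and b="c N"] IH by simp
qed

lemma aux_pow:
  fixes x c D :: real
  assumes "D > 0"
  shows "x^n * (c / D^(n+2)) = c * (x / D)^n / D^2"
  using assms by (simp add: power_divide power_add field_simps power2_eq_square)

lemma geo_b:
  fixes q :: real
  assumes "0 \<le> q" "q < 1"
  shows "summable (\<lambda>n. of_nat (Suc n) * q^n)"
  using geometric_deriv_sums[of q] assms by (auto simp: sums_iff)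

context
  fixes T :: "(complex \<Rightarrow> complex) \<Rightarrow> (complex \<Rightarrow> complex)"
  assumes T: "bounded_op_A2 T"
begin

lemma sums_ip:
  assumes a: "cmod a < 1" and zeta: "cmod \<zeta> < 1 - cmod a" and h: "h \<in> bergman_space"
  shows "(\<lambda>n. cnj \<zeta> ^ n * ip (T (kk a n)) h) sums ip (T (bergman_kernel (a + \<zeta>))) h"
proof -
  obtain C where C: "\<And>f. f \<in> bergman_space \<Longrightarrow> bergman_norm (T f) \<le> C * bergman_norm f"
    using T_bound[OF T] by blast
  define C' where "C' = \<bar>C\<bar>"
  have C': "\<And>f. f \<in> bergman_space \<Longrightarrow> bergman_norm (T f) \<le> C' * bergman_norm f"
    using C bn_nonneg unfolding C'_def by (meson abs_ge_self mult_right_mono order_trans)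
  have C'0: "C' \<ge> 0" by (simp add: C'_def)
  define q where "q = cmod \<zeta> / (1 - cmod a)"
  have q: "0 \<le> q" "q < 1" using a zeta by (auto simp: q_def)
  define b where "b n = of_nat (Suc n) * q^n / (1 - cmod a)^2" for n
  have sb: "summable b" unfolding b_def by (rule summable_divide[OF geo_b[OF q]])
  have bnd: "cmod (cnj \<zeta> ^ n * kk a n z) \<le> b n" if z: "z \<in> BB" for n z
  proof -
    have "cmod (cnj \<zeta> ^ n * kk a n z) = cmod \<zeta> ^ n * cmod (kk a n z)"
      by (simp add: norm_mult norm_power)
    also have "\<dots> \<le> cmod \<zeta> ^ n * (of_nat (Suc n) / (1 - cmod a)^(n+2))"
      by (rule mult_left_mono[OF kk_bound[OF a z]]) simp
    also have "\<dots> = b n" unfolding b_def q_def using a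
      by (intro aux_pow) simp
    finally show ?thesis .
  qed
  have KK: "bergman_kernel (a + \<zeta>) \<in> bergman_space"
    using norm_triangle_ineq[of a \<zeta>] zeta by (intro K_bs) simp
  define S where "S N = (\<lambda>x. \<Sum>n<N. cnj \<zeta> ^ n * kk a n x)" for N
  have Sbs: "S N \<in> bergman_space" for N unfolding S_def by (rule sum_bs) (rule kk_bs[OF a])
  have TS: "T (S N) z = (\<Sum>n<N. cnj \<zeta> ^ n * T (kk a n) z)" if "z \<in> BB" for N z
    unfolding S_def using T_sum[OF T, where N=N and g="kk a" and z=z and c="\<lambda>n. cnj \<zeta> ^ n"] kk_bs[OF a] that by blast
  have P: "(\<Sum>n<N. cnj \<zeta> ^ n * ip (T (kk a n)) h) = ip (T (S N)) h" for N
  proof -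
    have "(\<Sum>n<N. cnj \<zeta> ^ n * ip (T (kk a n)) h) = ip (\<lambda>x. \<Sum>n<N. cnj \<zeta> ^ n * T (kk a n) x) h"
      by (rule ip_sum[symmetric]) (use T_bs[OF T kk_bs[OF a]] h in auto)
    also have "\<dots> = ip (T (S N)) h" by (rule ip_cong) (use TS in auto)
    finally show ?thesis .
  qed
  have est: "cmod (ip (T (bergman_kernel (a + \<zeta>))) h - ip (T (S N)) h) \<le> C' * (\<Sum>i. b (i + N)) * bergman_norm h" for N
  proof -
    have d1: "ip (T (bergman_kernel (a + \<zeta>))) h - ip (T (S N)) h = ip (\<lambda>z. T (bergman_kernel (a + \<zeta>)) z - T (S N) z) h"
      by (rule ip_diff[symmetric, OF T_bs[OF T KK] T_bs[OF T Sbs] h])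
    have "cmod \<dots> \<le> bergman_norm (\<lambda>z. T (bergman_kernel (a + \<zeta>)) z - T (S N) z) * bergman_norm h"
      by (rule CS[OF diff_bs(1)[OF T_bs[OF T KK] T_bs[OF T Sbs]] h])
    also have "bergman_norm (\<lambda>z. T (bergman_kernel (a + \<zeta>)) z - T (S N) z) = bergman_norm (T (\<lambda>x. bergman_kernel (a + \<zeta>) x - S N x))"
      by (rule bn_cong) (use T_diff[OF T KK Sbs] in auto)
    also have "\<dots> \<le> C' * bergman_norm (\<lambda>x. bergman_kernel (a + \<zeta>) x - S N x)"
      by (rule C'[OF diff_bs(1)[OF KK Sbs]])
    also have "bergman_norm (\<lambda>x. bergman_kernel (a + \<zeta>) x - S N x) \<le> (\<Sum>i. b (i + N))"
    proof (rule bounded_bn)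
      show "continuous_on BB (\<lambda>x. bergman_kernel (a + \<zeta>) x - S N x)"
        by (rule bs_cont[OF diff_bs(1)[OF KK Sbs]])
      fix z assume z: "z \<in> BB"
      show "cmod (bergman_kernel (a + \<zeta>) z - S N z) \<le> (\<Sum>i. b (i + N))"
        unfolding S_def by (rule tail_bound[OF K_expand[OF a zeta z] bnd[OF z] sb])
    qed
    finally show ?thesis using C'0 bn_nonneg[of h]
      by (smt (verit, best) d1 mult_left_mono mult_right_mono)
  qed
  have tail0: "(\<Sum>i. b (i + N)) \<ge> 0" for N
    by (rule suminf_nonneg[OF summable_ignore_initial_segment[OF sb]]) (use q a in \<open>auto simp: b_def\<close>)
  show ?thesis unfolding sums_def
  proof (rule LIMSEQ_I)
    fix r :: real assume r: "r > 0"
    define M where "M = C' * bergman_norm h + 1"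
    have M: "M > 0" using C'0 bn_nonneg[of h] by (simp add: M_def add_nonneg_pos)
    obtain N0 where N0: "\<forall>n\<ge>N0. norm (\<Sum>i. b (i + n)) < r / M"
      using suminf_exist_split[OF divide_pos_pos[OF r M] sb] by blast
    show "\<exists>no. \<forall>n\<ge>no. norm ((\<Sum>i<n. cnj \<zeta> ^ i * ip (T (kk a i)) h) - ip (T (bergman_kernel (a + \<zeta>))) h) < r"
    proof (intro exI allI impI)
      fix n assume n: "n \<ge> N0"
      have t: "(\<Sum>i. b (i + n)) < r / M" using N0 n tail0[of n] by auto
      have "norm ((\<Sum>i<n. cnj \<zeta> ^ i * ip (T (kk a i)) h) - ip (T (bergman_kernel (a + \<zeta>))) h)
            = cmod (ip (T (bergman_kernel (a + \<zeta>))) h - ip (T (S n)) h)"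
        by (simp add: P norm_minus_commute)
      also have "\<dots> \<le> C' * (\<Sum>i. b (i + n)) * bergman_norm h" by (rule est)
      also have "\<dots> = (\<Sum>i. b (i + n)) * (C' * bergman_norm h)" by simp
      also have "\<dots> \<le> (\<Sum>i. b (i + n)) * M" using tail0[of n] by (intro mult_left_mono) (auto simp: M_def)
      also have "\<dots> < r / M * M" using t M by (intro mult_strict_right_mono) auto
      also have "\<dots> = r" using M by simp
      finally show "norm ((\<Sum>i<n. cnj \<zeta> ^ i * ip (T (kk a i)) h) - ip (T (bergman_kernel (a + \<zeta>))) h) < r" .
    qed
  qed
qed

end


lemma K_diff:
  assumes w: "cmod w \<le> \<rho>" and v: "cmod v \<le> \<rho>" and rho: "\<rho> < 1" and z: "z \<in> BB"
  shows "cmod (bergman_kernel w z - bergman_kernel v z) \<le> 4 * cmod (w - v) / (1 - \<rho>)^4"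
proof -
  define A where "A = 1 - z * cnj w"
  define B where "B = 1 - z * cnj v"
  have w1: "cmod w < 1" and v1: "cmod v < 1" using w v rho by auto
  have Ab: "cmod A \<ge> 1 - \<rho>" using den_bound[OF w1 z] w by (simp add: A_def)
  have Bb: "cmod B \<ge> 1 - \<rho>" using den_bound[OF v1 z] v by (simp add: B_def)
  have r0: "1 - \<rho> > 0" using rho by simp
  have A0: "A \<noteq> 0" and B0: "B \<noteq> 0" using Ab Bb r0 by auto
  have zb: "cmod z \<le> 1" using z by simp
  have A2: "cmod A \<le> 2"
  proof -
    have "cmod A \<le> 1 + cmod (z * cnj w)" unfolding A_def using norm_triangle_ineq4[of 1 "z * cnj w"] by simp
    also have "cmod (z * cnj w) \<le> 1" using zb w1 by (simp add: norm_mult mult_le_one)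
    finally show ?thesis by simp
  qed
  have B2: "cmod B \<le> 2"
  proof -
    have "cmod B \<le> 1 + cmod (z * cnj v)" unfolding B_def using norm_triangle_ineq4[of 1 "z * cnj v"] by simp
    also have "cmod (z * cnj v) \<le> 1" using zb v1 by (simp add: norm_mult mult_le_one)
    finally show ?thesis by simp
  qed
  have e: "bergman_kernel w z - bergman_kernel v z = (B - A) * (B + A) / (A^2 * B^2)"
    unfolding bergman_kernel_def A_def[symmetric] B_def[symmetric] using A0 B0
    by (simp add: field_simps power2_eq_square)
  have BA: "cmod (B - A) \<le> cmod (w - v)"
  proof -
    have "B - A = z * cnj (w - v)" by (simp add: A_def B_def algebra_simps)
    hence "cmod (B - A) = cmod z * cmod (w - v)" by (simp only: norm_mult complex_mod_cnj)
    thus ?thesis using zb by (simp add: mult_left_le_one_le)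
  qed
  have BpA: "cmod (B + A) \<le> 4" using norm_triangle_ineq[of B A] A2 B2 by simp
  have num: "cmod ((B - A) * (B + A)) \<le> cmod (w - v) * 4"
    unfolding norm_mult by (rule mult_mono[OF BA BpA]) auto
  have den: "(1 - \<rho>)^4 \<le> cmod (A^2 * B^2)"
  proof -
    have "(1 - \<rho>)^4 = (1 - \<rho>)^2 * (1 - \<rho>)^2" by (simp add: power_add[symmetric])
    also have "\<dots> \<le> (cmod A)^2 * (cmod B)^2"
      using Ab Bb r0 by (intro mult_mono power_mono) auto
    finally show ?thesis by (simp add: norm_mult norm_power)
  qed
  have "cmod ((B - A) * (B + A) / (A^2 * B^2)) \<le> cmod (w - v) * 4 / (1 - \<rho>)^4"
    unfolding norm_divide by (rule frac_le[OF _ num _ den]) (use r0 in auto)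
  thus ?thesis unfolding e by (simp add: mult.commute)
qed

context
  fixes T :: "(complex \<Rightarrow> complex) \<Rightarrow> (complex \<Rightarrow> complex)"
  assumes T: "bounded_op_A2 T"
begin

lemma N_cont: "continuous_on BB (\<lambda>w. bergman_norm (T (bergman_kernel w)))"
proof (rule continuous_at_imp_continuous_on, intro ballI)
  obtain C where C: "\<And>f. f \<in> bergman_space \<Longrightarrow> bergman_norm (T f) \<le> C * bergman_norm f"
    using T_bound[OF T] by blast
  define C' where "C' = \<bar>C\<bar>"
  have C': "\<And>f. f \<in> bergman_space \<Longrightarrow> bergman_norm (T f) \<le> C' * bergman_norm f"
    using C bn_nonneg unfolding C'_def by (meson abs_ge_self mult_right_mono order_trans)
  have C'0: "C' \<ge> 0" by (simp add: C'_def)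
  fix w0 assume w0: "w0 \<in> BB"
  define \<rho> where "\<rho> = (1 + cmod w0) / 2"
  have rho: "cmod w0 < \<rho>" "\<rho> < 1" using w0 by (auto simp: \<rho>_def)
  define L where "L = C' * 4 / (1 - \<rho>)^4"
  have L: "L \<ge> 0" using rho C'0 by (simp add: L_def)
  have Kw0: "bergman_kernel w0 \<in> bergman_space" using w0 by (intro K_bs) simp
  have key: "\<bar>bergman_norm (T (bergman_kernel x)) - bergman_norm (T (bergman_kernel w0))\<bar> \<le> L * cmod (x - w0)"
    if x: "cmod x \<le> \<rho>" for x
  proof -
    have Kx: "bergman_kernel x \<in> bergman_space" using x rho by (intro K_bs) simp
    have "\<bar>bergman_norm (T (bergman_kernel x)) - bergman_norm (T (bergman_kernel w0))\<bar> \<le>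
          bergman_norm (\<lambda>z. T (bergman_kernel x) z - T (bergman_kernel w0) z)"
      by (rule rev_tri[OF T_bs[OF T Kx] T_bs[OF T Kw0]])
    also have "\<dots> = bergman_norm (T (\<lambda>z. bergman_kernel x z - bergman_kernel w0 z))"
      by (rule bn_cong) (use T_diff[OF T Kx Kw0] in auto)
    also have "\<dots> \<le> C' * bergman_norm (\<lambda>z. bergman_kernel x z - bergman_kernel w0 z)"
      by (rule C'[OF diff_bs(1)[OF Kx Kw0]])
    also have "bergman_norm (\<lambda>z. bergman_kernel x z - bergman_kernel w0 z) \<le> 4 * cmod (x - w0) / (1 - \<rho>)^4"
      by (rule bounded_bn[OF bs_cont[OF diff_bs(1)[OF Kx Kw0]]]) (rule K_diff[OF x _ rho(2)], use rho in auto)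
    finally show ?thesis using C'0 by (simp add: L_def mult_left_mono)
  qed
  show "isCont (\<lambda>w. bergman_norm (T (bergman_kernel w))) w0"
    unfolding isCont_def LIM_eq
  proof (intro allI impI)
    fix r :: real assume r: "r > 0"
    define s where "s = min (\<rho> - cmod w0) (r / (L + 1))"
    have s: "s > 0" using rho r L by (simp add: s_def)
    show "\<exists>s>0. \<forall>x. x \<noteq> w0 \<and> norm (x - w0) < s \<longrightarrow>
          norm (bergman_norm (T (bergman_kernel x)) - bergman_norm (T (bergman_kernel w0))) < r"
    proof (intro exI[of _ s] conjI allI impI s)
      fix x assume x: "x \<noteq> w0 \<and> norm (x - w0) < s"
      have "cmod x \<le> cmod w0 + cmod (x - w0)" using norm_triangle_ineq[of w0 "x - w0"] by simp
      also have "\<dots> \<le> \<rho>" using x by (simp add: s_def)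
      finally have xr: "cmod x \<le> \<rho>" .
      have "norm (bergman_norm (T (bergman_kernel x)) - bergman_norm (T (bergman_kernel w0))) \<le> L * cmod (x - w0)"
        using key[OF xr] by simp
      also have "\<dots> \<le> L * (r / (L + 1))" using x L by (intro mult_left_mono) (auto simp: s_def)
      also have "\<dots> < r" using L r by (simp add: field_simps)
      finally show "norm (bergman_norm (T (bergman_kernel x)) - bergman_norm (T (bergman_kernel w0))) < r" .
    qed
  qed
qed

end


lemma aux_pow2:
  fixes K s r D :: real
  assumes "D > 0"
  shows "(K * (s / D^(n+2))) * r^n = K / D^2 * (s * (r / D)^n)"
  using assms by (simp add: power_divide power_add field_simps power2_eq_square)

theorem lemma27:
  fixes T :: "(complex \<Rightarrow> complex) \<Rightarrow> (complex \<Rightarrow> complex)" and p :: real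
  assumes "bounded_op_A2 T" and "0 < p"
  shows "subharmonic_on (ball 0 1) (\<lambda>w. bergman_norm (T (bergman_kernel w)) powr p)"
proof -
  note T = assms(1) and p = assms(2)
  define N where "N w = bergman_norm (T (bergman_kernel w))" for w
  define F where "F w = N w powr p" for w
  have Nc: "continuous_on BB N" unfolding N_def by (rule N_cont[OF T])
  have N0: "N w \<ge> 0" for w by (simp add: N_def bn_nonneg)
  have Fc: "continuous_on BB F" unfolding F_def
    by (rule continuous_on_powr'[OF Nc continuous_on_const]) (use N0 p in auto)
  have usc: "upper_semicontinuous_on BB F"
    unfolding upper_semicontinuous_on_def
  proof (intro ballI allI impI)
    fix a c assume a: "a \<in> BB" and c: "F a < c"
    have "(F \<longlongrightarrow> F a) (at a within BB)" using Fc a by (simp add: continuous_on_def)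
    thus "\<forall>\<^sub>F x in at a within BB. F x < c" using c by (rule order_tendstoD(2))
  qed
  obtain C where C: "\<And>f. f \<in> bergman_space \<Longrightarrow> bergman_norm (T f) \<le> C * bergman_norm f"
    using T_bound[OF T] by blast
  define C' where "C' = \<bar>C\<bar>"
  have C': "\<And>f. f \<in> bergman_space \<Longrightarrow> bergman_norm (T f) \<le> C' * bergman_norm f"
    using C bn_nonneg unfolding C'_def by (meson abs_ge_self mult_right_mono order_trans)
  have C'0: "C' \<ge> 0" by (simp add: C'_def)
  have mv: "set_integrable lborel {0..2*pi} (\<lambda>t. F (a + r * cis t)) \<and>
        F a \<le> (1 / (2*pi)) * (\<integral>t\<in>{0..2*pi}. F (a + r * cis t) \<partial>lborel)"
    if r: "r > 0" and sub: "cball a r \<subseteq> BB" for a r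
  proof -
    have ar: "cmod a + r < 1" using sub r by (simp add: cball_subset_ball_iff)
    have a1: "cmod a < 1" using ar r by simp
    have zr: "cmod (of_real r * cis t) = r" for t using r by (simp add: norm_mult)
    have inB: "a + of_real r * cis t \<in> BB" for t
    proof -
      have "cmod (a + of_real r * cis t) \<le> cmod a + r" using norm_triangle_ineq[of a "of_real r * cis t"] zr by simp
      thus ?thesis using ar by simp
    qed
    have contc: "continuous_on {0..2*pi} (\<lambda>t. F (a + of_real r * cis t))"
    proof (rule continuous_on_compose2[OF Fc])
      show "(\<lambda>t. a + of_real r * cis t) ` {0..2*pi} \<subseteq> BB" using inB by auto
    qed (auto intro!: continuous_intros)
    have Iint: "set_integrable lborel {0..2*pi} (\<lambda>t. F (a + of_real r * cis t))"
      unfolding set_integrable_def by (rule borel_integrable_compact[OF compact_Icc contc])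
    have Fnn: "F w \<ge> 0" for w by (simp add: F_def)
    have Inn: "0 \<le> (LINT t:{0..2*pi}|lborel. F (a + of_real r * cis t))"
      unfolding set_lebesgue_integral_def by (rule integral_nonneg_AE) (auto simp: indicator_def Fnn)
    have main: "F a \<le> (1 / (2*pi)) * (LINT t:{0..2*pi}|lborel. F (a + of_real r * cis t))"
    proof (cases "N a = 0")
      case True
      hence "F a = 0" by (simp add: F_def)
      thus ?thesis using Inn by simp
    next
      case False
      hence Na: "N a > 0" using N0[of a] by simp
      define h where "h = T (bergman_kernel a)"
      have Ka: "bergman_kernel a \<in> bergman_space" using a1 by (rule K_bs)
      have h: "h \<in> bergman_space" unfolding h_def by (rule T_bs[OF T Ka])
      have bnh: "bergman_norm h = N a" by (simp add: h_def N_def)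
      define d where "d n = ip (T (kk a n)) h" for n
      define c where "c n = cnj (d n)" for n
      have kk0: "kk a 0 = bergman_kernel a" by (rule ext) (simp add: kk_def bergman_kernel_def power2_eq_square)
      have c0: "cmod (c 0) = (N a)^2"
      proof -
        have "d 0 = ip h h" by (simp add: d_def kk0 h_def)
        also have "\<dots> = of_real (Qn h)" by (rule ip_self[OF h])
        finally show ?thesis using bnh by (simp add: c_def bn_sq[symmetric] norm_power)
      qed
      have dbound: "cmod (d n) \<le> C' * N a * (of_nat (Suc n) / (1 - cmod a)^(n+2))" for n
      proof -
        have "cmod (d n) \<le> bergman_norm (T (kk a n)) * bergman_norm h"
          unfolding d_def by (rule CS[OF T_bs[OF T kk_bs[OF a1]] h])
        also have "\<dots> \<le> (C' * (of_nat (Suc n) / (1 - cmod a)^(n+2))) * bergman_norm h"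
        proof (rule mult_right_mono[OF _ bn_nonneg])
          show "bergman_norm (T (kk a n)) \<le> C' * (of_nat (Suc n) / (1 - cmod a)^(n+2))"
            using C'[OF kk_bs[OF a1, of n]] mult_left_mono[OF kk_bn[OF a1, of n] C'0] by linarith
        qed
        finally show ?thesis using bnh by (simp add: mult_ac)
      qed
      define q where "q = r / (1 - cmod a)"
      have q: "0 \<le> q" "q < 1" using r ar by (auto simp: q_def)
      have summ: "summable (\<lambda>n. cmod (c n) * r^n)"
      proof (rule summable_comparison_test[OF _ summable_mult[OF geo_b[OF q], of "C' * N a / (1 - cmod a)^2"]])
        show "\<exists>N0. \<forall>n\<ge>N0. norm (cmod (c n) * r^n) \<le> C' * N a / (1 - cmod a)^2 * (of_nat (Suc n) * q^n)"
        proof (intro exI allI impI)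
          fix n :: nat
          have "norm (cmod (c n) * r^n) = cmod (d n) * r^n" using r by (simp add: c_def)
          also have "\<dots> \<le> (C' * N a * (of_nat (Suc n) / (1 - cmod a)^(n+2))) * r^n"
            using r by (intro mult_right_mono dbound) auto
          also have "\<dots> = C' * N a / (1 - cmod a)^2 * (of_nat (Suc n) * q^n)"
            unfolding q_def using a1 by (intro aux_pow2) simp
          finally show "norm (cmod (c n) * r^n) \<le> C' * N a / (1 - cmod a)^2 * (of_nat (Suc n) * q^n)" .
        qed
      qed
      have psi: "cmod (\<Sum>n. c n * (of_real r * cis t)^n) \<le> N (a + of_real r * cis t) * N a" for t
      proof -
        have zt: "cmod (of_real r * cis t) < 1 - cmod a" using zr ar by simp
        have "(\<lambda>n. cnj (of_real r * cis t) ^ n * d n) sums ip (T (bergman_kernel (a + of_real r * cis t))) h"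
          unfolding d_def by (rule sums_ip[OF T a1 zt h])
        hence "(\<lambda>n. cnj (cnj (of_real r * cis t) ^ n * d n)) sums cnj (ip (T (bergman_kernel (a + of_real r * cis t))) h)"
          by (rule sums_cnj[THEN iffD2])
        hence "(\<Sum>n. c n * (of_real r * cis t)^n) = cnj (ip (T (bergman_kernel (a + of_real r * cis t))) h)"
          by (simp add: c_def sums_iff mult.commute)
        hence "cmod (\<Sum>n. c n * (of_real r * cis t)^n) = cmod (ip (T (bergman_kernel (a + of_real r * cis t))) h)"
          by simp
        also have "\<dots> \<le> bergman_norm (T (bergman_kernel (a + of_real r * cis t))) * bergman_norm h"
          by (rule CS[OF T_bs[OF T K_bs] h]) (use inB[of t] in simp)
        finally show ?thesis by (simp add: N_def bnh)
      qed
      have "2*pi * cmod (c 0) powr p \<le> (LINT t:{0..2*pi}|lborel. cmod (\<Sum>n. c n * (of_real r * cis t)^n) powr p)"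
        by (rule series_mean[OF summ r p])
      also have "\<dots> \<le> (LINT t:{0..2*pi}|lborel. F (a + of_real r * cis t) * N a powr p)"
        unfolding set_lebesgue_integral_def
      proof (rule integral_mono')
        show "integrable lborel (\<lambda>x. indicat_real {0..2 * pi} x *\<^sub>R (F (a + complex_of_real r * cis x) * N a powr p))"
          using integrable_mult_right[OF Iint[unfolded set_integrable_def], of "N a powr p"]
          by (simp add: mult_ac)
        fix t :: real
        have "cmod (\<Sum>n. c n * (of_real r * cis t)^n) powr p \<le> (N (a + of_real r * cis t) * N a) powr p"
          using psi[of t] p by (intro powr_mono2) auto
        also have "\<dots> = F (a + of_real r * cis t) * N a powr p"
          by (simp add: F_def powr_mult N0)
        finally show "indicat_real {0..2 * pi} t *\<^sub>R cmod (\<Sum>n. c n * (of_real r * cis t)^n) powr p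
            \<le> indicat_real {0..2 * pi} t *\<^sub>R (F (a + complex_of_real r * cis t) * N a powr p)"
          by (auto simp: indicator_def)
        show "0 \<le> indicat_real {0..2 * pi} t *\<^sub>R (F (a + complex_of_real r * cis t) * N a powr p)"
          by (auto simp: indicator_def Fnn)
      qed
      also have "\<dots> = (LINT t:{0..2*pi}|lborel. F (a + of_real r * cis t)) * N a powr p"
        by (rule set_integral_mult_left)
      finally have ineq: "2*pi * cmod (c 0) powr p \<le> (LINT t:{0..2*pi}|lborel. F (a + of_real r * cis t)) * N a powr p" .
      have "cmod (c 0) powr p = N a powr p * N a powr p"
        unfolding c0 using Na by (simp add: powr_mult[symmetric] power2_eq_square)
      with ineq have "(2*pi * N a powr p) * N a powr p \<le> (LINT t:{0..2*pi}|lborel. F (a + of_real r * cis t)) * N a powr p"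
        by (simp add: mult_ac)
      hence "2*pi * N a powr p \<le> (LINT t:{0..2*pi}|lborel. F (a + of_real r * cis t))"
        using Na by (simp add: mult_le_cancel_right)
      thus ?thesis by (simp add: F_def field_simps)
    qed
    show ?thesis using Iint main by simp
  qed
  show ?thesis
    unfolding subharmonic_on_def using usc mv unfolding F_def N_def by blast
qed


end
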